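(* Suppose $(P,n,a,b)$ is good. Let $m$ be the minimal integer $m\ge n+1$ such that $Q(x)=P(x)-x^m$ satisfies $Q(x)>0$ for all $x\in[a,b]$. Then $(Q,m,a,b)$ is good.
   Context: Let $\mathcal{B}_n$ be the set of polynomials $1+\sum_{k=1}^n a_kx^k$ with $a_k\in\{-1,0,1\}$. A quadruple $(P,n,a,b)$ is called good if $P\in\mathcal{B}_n$, $0.5<a<b<1$, $P(a)>a^{n+1}/(1-a)$, $P(b)>b^{n+1}/(1-b)$, $P(x)>0$ for all $x\in[a,b]$, and there exists $x\in(a,b)$ with $P(x)<x^{n+1}/(1-x)$. *)

theory Defs
  imports "HOL-Computational_Algebra.Polynomial" Complex_Main
begin

definition B :: "nat \<Rightarrow> real poly set" where
  "B n = {P. coeff P 0 = 1 \<and> (\<forall>k\<in>{1..n}. coeff P k \<in> {-1, 0, 1}) \<and> (\<forall>k>n. coeff P k = 0)}"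

definition good :: "real poly \<Rightarrow> nat \<Rightarrow> real \<Rightarrow> real \<Rightarrow> bool" where
  "good P n a b \<longleftrightarrow>
     P \<in> B n \<and> 1/2 < a \<and> a < b \<and> b < 1 \<and>
     poly P a > a ^ (n+1) / (1 - a) \<and>
     poly P b > b ^ (n+1) / (1 - b) \<and>
     (\<forall>x\<in>{a..b}. poly P x > 0) \<and>
     (\<exists>x\<in>{a<..<b}. poly P x < x ^ (n+1) / (1 - x))"

end

theory Submission
  imports Defs
begin

lemma tail_ineq:
  fixes x :: real and n m :: nat
  assumes "0 < x" "x < 1" "m \<ge> n + 1" "p > x ^ (n+1) / (1 - x)"
  shows "p - x ^ m > x ^ (m+1) / (1 - x)"
proof -
  have "x ^ m \<le> x ^ (n+1)" using assms by (intro power_decreasing) auto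
  hence "x ^ (m+1) + x ^ m * (1 - x) \<le> x ^ (n+1)" by (simp add: algebra_simps)
  hence "(x ^ (m+1) + x ^ m * (1 - x)) / (1 - x) \<le> x ^ (n+1) / (1 - x)"
    using assms by (intro divide_right_mono) auto
  moreover have "(x ^ (m+1) + x ^ m * (1 - x)) / (1 - x) = x ^ (m+1) / (1 - x) + x ^ m"
    using assms by (simp add: add_divide_distrib)
  ultimately have "x ^ (m+1) / (1 - x) + x ^ m \<le> x ^ (n+1) / (1 - x)" by simp
  thus ?thesis using assms(4) by linarith
qed

theorem lemma3p1:
  fixes P :: "real poly" and n m :: nat and a b :: real
  assumes "good P n a b"
    and "m \<ge> n + 1"
    and "\<forall>x\<in>{a..b}. poly P x - x ^ m > 0"
    and "\<forall>m'. n + 1 \<le> m' \<and> m' < m \<longrightarrow> \<not> (\<forall>x\<in>{a..b}. poly P x - x ^ m' > 0)"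
  shows "good (P - monom 1 m) m a b"
proof -
  note g = assms(1)[unfolded good_def]
  have ev: "poly (P - monom 1 m) x = poly P x - x ^ m" for x
    by (simp add: poly_monom)
  have PB: "P \<in> B n" using g by blast
  have QB: "P - monom 1 m \<in> B m"
    using PB assms(2) unfolding B_def by (auto simp: coeff_monom)
  have ha: "poly (P - monom 1 m) a > a ^ (m+1) / (1 - a)"
  proof -
    have "0 < a" "a < 1" "poly P a > a ^ (n+1) / (1 - a)" using g by auto
    from tail_ineq[OF this(1,2) assms(2) this(3)] show ?thesis unfolding ev .
  qed
  have hb: "poly (P - monom 1 m) b > b ^ (m+1) / (1 - b)"
  proof -
    have "0 < b" "b < 1" "poly P b > b ^ (n+1) / (1 - b)" using g by auto
    from tail_ineq[OF this(1,2) assms(2) this(3)] show ?thesis unfolding ev .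
  qed
  have ex: "\<exists>x\<in>{a<..<b}. poly (P - monom 1 m) x < x ^ (m+1) / (1 - x)"
  proof (cases "m = n + 1")
    case True
    from g obtain x where x: "x \<in> {a<..<b}" "poly P x < x ^ (n+1) / (1 - x)" by blast
    have x1: "x < 1" "0 < x" using x g by auto
    have "x ^ (n+1) / (1 - x) - x ^ (n+1) = x ^ (m+1) / (1 - x)"
      using x1 True by (simp add: field_simps)
    thus ?thesis using x True unfolding ev by (intro bexI[of _ x]) auto
  next
    case False
    hence "n + 1 \<le> m - 1" "m - 1 < m" using assms(2) by auto
    then obtain y where y: "y \<in> {a..b}" "\<not> poly P y - y ^ (m-1) > 0"
      using assms(4) by blast
    have y1: "y < 1" "1/2 < y" using y g by auto
    have mm: "y ^ m = y ^ (m-1) * y" using assms(2)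
      by (metis add_leD2 le_add_diff_inverse2 power_Suc2 Suc_eq_plus1)
    have "poly P y - y ^ m \<le> y ^ (m-1) * (1 - y)" using y(2) mm by (simp add: algebra_simps)
    also have "\<dots> < y ^ (m+1) / (1 - y)"
    proof -
      have pos: "y ^ (m-1) > 0" using y1 by simp
      have "(1 - y) * (1 - y) < y * y" using y1 by (simp add: algebra_simps)
      hence "y ^ (m-1) * ((1 - y) * (1 - y)) < y ^ (m-1) * (y * y)"
        using pos by simp
      moreover have "y ^ (m+1) = y ^ (m-1) * (y * y)" using assms(2) mm by simp
      ultimately show ?thesis using y1 by (simp add: field_simps)
    qed
    finally have lt: "poly (P - monom 1 m) y < y ^ (m+1) / (1 - y)" unfolding ev .
    have "y \<noteq> a" using lt ha by auto
    moreover have "y \<noteq> b" using lt hb by auto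
    ultimately show ?thesis using y lt by (intro bexI[of _ y]) auto
  qed
  show ?thesis unfolding good_def using QB ha hb ex g assms(3) ev by auto
qed

end
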